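(* Let $B$ be a blueprint with a zero $0$. Then a subset $I\subseteq B$ is an ideal of $B$ if and only if: (1) $ab\in I$ for all $a\in I$, $b\in B$; (2) $0\in I$; and (3) whenever $a+\sum_j b_j\equiv\sum_k c_k$ with $a\in B$ and all $b_j,c_k\in I$, then $a\in I$.
   Context: A monoid is a commutative semigroup $A$, written multiplicatively, with neutral element $1$. For a monoid $A$, $\mathbb N[A]$ denotes the semiring of finite formal sums $\sum a_i$ of elements $a_i\in A$ (repetitions allowed), with empty sum $\underline0$ and multiplication extended bilinearly from $A$. A pre-addition on $A$ is a relation $\mathcal R\subseteq\mathbb N[A]\times\mathbb N[A]$, written $\sum a_i\equiv\sum b_j$, which is an equivalence relation and satisfies: if $\sum a_i\equiv\sum b_j$ and $\sum c_k\equiv\sum d_l$, then $\sum a_i+\sum c_k\equiv\sum b_j+\sum d_l$ and $\sum_{i,k}a_ic_k\equiv\sum_{j,l}b_jd_l$. A blueprint $B=(A,\mathcal R)$ is a monoid $A$ with a pre-addition $\mathcal R$; we write $a\in B$ for $a\in A$. An element $e$ with $e\equiv\underline0$ is a zero of $B$. For an equivalence relation $\sim$ on $A$, its linear extension $\sim_{\mathbb N}$ is the equivalence relation on $\mathbb N[A]$ generated by $\sum_{i=1}^n a_i\sim_{\mathbb N}\sum_{i=1}^n b_i$ whenever $a_i\sim b_i$ for all $i$. For a subset $I\subseteq B$, let $\sim^I$ be the equivalence relation on $A$ with $a\sim^I b$ iff $a=b$ or $a,b\in I$, and let $\sim_I$ be the relation on $A$ with $a\sim_I b$ iff there is a finite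 sequence $a\equiv\sum_k c_{1,k}\sim^I_{\mathbb N}\sum_k d_{1,k}\equiv\sum_k c_{2,k}\sim^I_{\mathbb N}\cdots\sim^I_{\mathbb N}\sum_k d_{n,k}\equiv b$ with $c_{i,k},d_{i,k}\in A$. An ideal of $B$ is a subset $I\subseteq B$ such that (I1) $ab\in I$ for all $a\in I$, $b\in B$; (I2) every zero of $B$ lies in $I$; (I3) if $a\sim_I b$ and $b\in I$, then $a\in I$. *)

theory Defs
  imports Main "HOL-Library.Multiset"
begin

text \<open>The monoid A is modelled as a type 'a of class comm_monoid_mult.
  N[A] is modelled as 'a multiset (finite formal sums, with repetitions);
  the empty sum is the empty multiset, sums are multiset sums.\<close>

definition nmult :: "'a::comm_monoid_mult multiset \<Rightarrow> 'a multiset \<Rightarrow> 'a multiset" where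
  "nmult M N = sum_mset (image_mset (\<lambda>a. image_mset (\<lambda>c. a * c) N) M)"

definition pre_addition :: "('a::comm_monoid_mult multiset \<Rightarrow> 'a multiset \<Rightarrow> bool) \<Rightarrow> bool" where
  "pre_addition R \<longleftrightarrow> equivp R \<and>
     (\<forall>A B C D. R A B \<longrightarrow> R C D \<longrightarrow> R (A + C) (B + D) \<and> R (nmult A C) (nmult B D))"

text \<open>A blueprint is a monoid (the type 'a) together with a pre-addition R.\<close>
abbreviation blueprint :: "('a::comm_monoid_mult multiset \<Rightarrow> 'a multiset \<Rightarrow> bool) \<Rightarrow> bool" where
  "blueprint R \<equiv> pre_addition R"

definition is_zero :: "('a::comm_monoid_mult multiset \<Rightarrow> 'a multiset \<Rightarrow> bool) \<Rightarrow> 'a \<Rightarrow> bool" where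
  "is_zero R e \<longleftrightarrow> R {#e#} {#}"

definition simI :: "'a set \<Rightarrow> 'a \<Rightarrow> 'a \<Rightarrow> bool" where
  "simI I a b \<longleftrightarrow> a = b \<or> (a \<in> I \<and> b \<in> I)"

definition lin_ext :: "('a \<Rightarrow> 'a \<Rightarrow> bool) \<Rightarrow> 'a multiset \<Rightarrow> 'a multiset \<Rightarrow> bool" where
  "lin_ext r = equivclp (rel_mset r)"

text \<open>a ~_I b iff a = C1 ~ D1 = C2 ~ ... ~ Dn = b (\<equiv> steps via R, ~ steps via lin_ext).\<close>
definition sim_sub :: "('a::comm_monoid_mult multiset \<Rightarrow> 'a multiset \<Rightarrow> bool) \<Rightarrow> 'a set \<Rightarrow> 'a \<Rightarrow> 'a \<Rightarrow> bool" where
  "sim_sub R I a b \<longleftrightarrow> ((R OO lin_ext (simI I))\<^sup>+\<^sup>+ OO R) {#a#} {#b#}"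

definition is_ideal :: "('a::comm_monoid_mult multiset \<Rightarrow> 'a multiset \<Rightarrow> bool) \<Rightarrow> 'a set \<Rightarrow> bool" where
  "is_ideal R I \<longleftrightarrow>
     (\<forall>a\<in>I. \<forall>b. a * b \<in> I) \<and>
     (\<forall>e. is_zero R e \<longrightarrow> e \<in> I) \<and>
     (\<forall>a b. sim_sub R I a b \<longrightarrow> b \<in> I \<longrightarrow> a \<in> I)"

end

theory Submission
  imports Defs
begin

lemma rel_simI_decomp:
  assumes "rel_mset (simI I) X Y"
  shows "\<exists>XI YI. set_mset XI \<subseteq> I \<and> set_mset YI \<subseteq> I \<and> X + YI = Y + XI"
proof -
  have "rel_mset' (simI I) X Y" using rel_mset_imp_rel_mset'[OF assms] .
  moreover have "rel_mset' S X Y \<Longrightarrow> S = simI I \<Longrightarrow> \<exists>XI YI. set_mset XI \<subseteq> I \<and> set_mset YI \<subseteq> I \<and> X + YI = Y + XI" for S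
  proof (induct rule: rel_mset'.induct)
  case Zero
  then show ?case by (intro exI[of _ "{#}"]) auto
next
  case (Plus S a b M N)
  then obtain XI YI where h: "set_mset XI \<subseteq> I" "set_mset YI \<subseteq> I" "M + YI = N + XI" by blast
  show ?case
  proof (cases "a = b")
    case True
    then show ?thesis using h by (intro exI[of _ XI] exI[of _ YI]) auto
  next
    case False
    then have "a \<in> I" "b \<in> I" using Plus by (auto simp: simI_def)
    then show ?thesis using h
      by (intro exI[of _ "add_mset a XI"] exI[of _ "add_mset b YI"]) auto
  qed
  qed
  ultimately show ?thesis by blast
qed

definition QQ where "QQ R I X \<longleftrightarrow> (\<exists>Bs Cs. set_mset Bs \<subseteq> I \<and> set_mset Cs \<subseteq> I \<and> R (X + Bs) Cs)"

lemma pa_props: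
  assumes "pre_addition R"
  shows "R A A" "R A B \<Longrightarrow> R B A" "R A B \<Longrightarrow> R B C \<Longrightarrow> R A C"
    "R A B \<Longrightarrow> R C D \<Longrightarrow> R (A + C) (B + D)"
  using assms unfolding pre_addition_def
  by (auto intro: equivp_reflp equivp_symp equivp_transp)

lemma QQ_R:
  assumes "pre_addition R" "R X Y" "QQ R I Y" shows "QQ R I X"
proof -
  obtain Bs Cs where h: "set_mset Bs \<subseteq> I" "set_mset Cs \<subseteq> I" "R (Y + Bs) Cs"
    using assms(3) by (auto simp: QQ_def)
  have "R (X + Bs) (Y + Bs)" using pa_props[OF assms(1)] assms(2) by blast
  then have "R (X + Bs) Cs" using pa_props(3)[OF assms(1)] h(3) by blast
  then show ?thesis using h unfolding QQ_def by blast
qed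

lemma QQ_rel:
  assumes "pre_addition R" "rel_mset (simI I) X Y \<or> rel_mset (simI I) Y X" "QQ R I Y"
  shows "QQ R I X"
proof -
  obtain XI YI where d: "set_mset XI \<subseteq> I" "set_mset YI \<subseteq> I" "X + YI = Y + XI"
    using assms(2) rel_simI_decomp[of I X Y] rel_simI_decomp[of I Y X] by (metis)
  obtain Bs Cs where h: "set_mset Bs \<subseteq> I" "set_mset Cs \<subseteq> I" "R (Y + Bs) Cs"
    using assms(3) by (auto simp: QQ_def)
  have "R (Y + Bs + XI) (Cs + XI)" using pa_props[OF assms(1)] h(3) by blast
  moreover have "Y + Bs + XI = X + (YI + Bs)" using d(3)
    by (metis add.assoc add.commute)
  ultimately have "R (X + (YI + Bs)) (Cs + XI)" by simp
  then show ?thesis using h d unfolding QQ_def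
    by (intro exI[of _ "YI + Bs"] exI[of _ "Cs + XI"]) auto
qed

lemma QQ_lin:
  assumes "pre_addition R" "lin_ext (simI I) X Y" "QQ R I Y"
  shows "QQ R I X"
proof -
  have "equivclp (rel_mset (simI I)) Y X"
    using assms(2) unfolding lin_ext_def by (rule equivclp_sym)
  then show ?thesis
  proof (induct rule: equivclp_induct)
    case base then show ?case using assms(3) .
  next
    case (step y z)
    then show ?case using QQ_rel[OF assms(1), of I z y] by blast
  qed
qed

lemma QQ_trancl:
  assumes "pre_addition R" "(R OO lin_ext (simI I))\<^sup>+\<^sup>+ X Y"
  shows "QQ R I Y \<Longrightarrow> QQ R I X"
  using assms(2)
proof (induct rule: tranclp_induct)
  case (base y)
  then show ?case using QQ_R[OF assms(1)] QQ_lin[OF assms(1)] by blast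
next
  case (step y z)
  then show ?case using QQ_R[OF assms(1)] QQ_lin[OF assms(1)] by blast
qed

lemma rep_zero:
  assumes "pre_addition R" "R {#z#} {#}"
  shows "R (replicate_mset n z) {#}"
proof (induct n)
  case 0 then show ?case using pa_props(1)[OF assms(1)] by simp
next
  case (Suc n)
  have "R ({#z#} + replicate_mset n z) ({#} + {#})"
    using pa_props(4)[OF assms(1) assms(2) Suc] .
  then show ?case by simp
qed

lemma rel_rep:
  assumes "set_mset Bs \<subseteq> I" "z \<in> I"
  shows "rel_mset (simI I) (replicate_mset (size Bs) z) Bs"
  using assms
proof (induct Bs)
  case empty then show ?case by (simp add: rel_mset_Zero)
next
  case (add x Bs)
  then show ?case by (auto intro!: rel_mset_Plus simp: simI_def)
qed

lemma lin_of_rel: "rel_mset r X Y \<Longrightarrow> lin_ext r X Y"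
  unfolding lin_ext_def equivclp_def by (auto intro: r_into_rtranclp)

theorem mainTheorem11:
  fixes R :: "'a::comm_monoid_mult multiset \<Rightarrow> 'a multiset \<Rightarrow> bool"
    and z :: 'a and I :: "'a set"
  assumes "blueprint R"
    and "is_zero R z"
  shows "is_ideal R I \<longleftrightarrow>
    (\<forall>a\<in>I. \<forall>b. a * b \<in> I) \<and>
    z \<in> I \<and>
    (\<forall>a Bs Cs. set_mset Bs \<subseteq> I \<longrightarrow> set_mset Cs \<subseteq> I \<longrightarrow> R ({#a#} + Bs) Cs \<longrightarrow> a \<in> I)"
proof
  assume id: "is_ideal R I"
  have zI: "z \<in> I" using id assms(2) unfolding is_ideal_def by blast
  have z0: "R {#z#} {#}" using assms(2) unfolding is_zero_def .
  note P = pa_props[OF assms(1)]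
  have "a \<in> I" if h: "set_mset Bs \<subseteq> I" "set_mset Cs \<subseteq> I" "R ({#a#} + Bs) Cs" for a Bs Cs
  proof -
    let ?n = "size Bs" and ?m = "size Cs"
    have r1: "R (replicate_mset ?n z) {#}" by (rule rep_zero[OF assms(1) z0])
    have "R ({#a#} + replicate_mset ?n z) ({#a#} + {#})" using P(4)[OF P(1) r1] .
    then have s1: "R {#a#} ({#a#} + replicate_mset ?n z)" using P(2) by simp
    have l1: "lin_ext (simI I) ({#a#} + replicate_mset ?n z) ({#a#} + Bs)"
      using rel_rep[OF h(1) zI] by (auto intro!: lin_of_rel rel_mset_Plus simp: simI_def)
    have l2: "lin_ext (simI I) Cs (replicate_mset ?m z)"
    proof -
      have "rel_mset (simI I) (replicate_mset ?m z) Cs" by (rule rel_rep[OF h(2) zI])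
      then show ?thesis unfolding lin_ext_def by (auto intro: equivclp_sym lin_of_rel[unfolded lin_ext_def])
    qed
    have r2: "R (replicate_mset ?m z) {#z#}"
      using P(3)[OF rep_zero[OF assms(1) z0] P(2)[OF z0]] .
    have "(R OO lin_ext (simI I))\<^sup>+\<^sup>+ {#a#} ({#a#} + Bs)" using s1 l1 by blast
    moreover have "(R OO lin_ext (simI I)) ({#a#} + Bs) (replicate_mset ?m z)" using h(3) l2 by blast
    ultimately have "(R OO lin_ext (simI I))\<^sup>+\<^sup>+ {#a#} (replicate_mset ?m z)" by simp
    then have "sim_sub R I a z" unfolding sim_sub_def using r2 by blast
    then show ?thesis using id zI unfolding is_ideal_def by blast
  qed
  then show "(\<forall>a\<in>I. \<forall>b. a * b \<in> I) \<and> z \<in> I \<and>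
    (\<forall>a Bs Cs. set_mset Bs \<subseteq> I \<longrightarrow> set_mset Cs \<subseteq> I \<longrightarrow> R ({#a#} + Bs) Cs \<longrightarrow> a \<in> I)"
    using id zI unfolding is_ideal_def by blast
next
  assume h: "(\<forall>a\<in>I. \<forall>b. a * b \<in> I) \<and> z \<in> I \<and>
    (\<forall>a Bs Cs. set_mset Bs \<subseteq> I \<longrightarrow> set_mset Cs \<subseteq> I \<longrightarrow> R ({#a#} + Bs) Cs \<longrightarrow> a \<in> I)"
  note P = pa_props[OF assms(1)]
  have zeros: "e \<in> I" if "is_zero R e" for e
    using h that unfolding is_zero_def by (metis add.right_neutral empty_iff set_mset_empty subsetI)
  have "a \<in> I" if s: "sim_sub R I a b" and b: "b \<in> I" for a b
  proof -
    obtain Y where c: "(R OO lin_ext (simI I))\<^sup>+\<^sup>+ {#a#} Y" "R Y {#b#}"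
      using s unfolding sim_sub_def by blast
    have "QQ R I {#b#}" unfolding QQ_def using b P(1)
      by (intro exI[of _ "{#}"] exI[of _ "{#b#}"]) auto
    then have "QQ R I Y" using QQ_R[OF assms(1) c(2)] by blast
    then have "QQ R I {#a#}" using QQ_trancl[OF assms(1) c(1)] by blast
    then show ?thesis using h unfolding QQ_def by blast
  qed
  then show "is_ideal R I" using h zeros unfolding is_ideal_def by blast
qed

end
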